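(* Let $G=(V,(c_{xy})_{x,y\in V})$ be a connected weighted finite graph and $\alpha=(\alpha_x)_{x\in V}$ positive site-weights. Then $$(1\wedge \alpha_{\min})\,\mathrm{gap}_{\rm RW}(G,\alpha)\le \mathrm{gap}_{\rm SIP}(G,\alpha)\le \mathrm{gap}_{\rm RW}(G,\alpha),$$ where $\alpha_{\min}:=\min_{x\in V}\alpha_x$.
   Context: $G=(V,(c_{xy}))$ is a finite graph with $|V|=n$ and symmetric non-negative edge weights $c_{xy}=c_{yx}\ge 0$, connected (the graph of pairs with $c_{xy}>0$ is connected). For $k\in\mathbb N$, $\Xi_k:=\{\eta\in\mathbb N_0^V:\sum_x\eta_x=k\}$. For $\eta$ with $\eta_x\ge1$, $\eta-\delta_x+\delta_y$ is the configuration obtained by moving one particle from $x$ to $y$. The symmetric inclusion process ${\rm SIP}_k(G,\alpha)$ is the continuous-time Markov chain on $\Xi_k$ with generator $L_kf(\eta)=\sum_{x\in V}\eta_x\sum_{y\in V}c_{xy}(\alpha_y+\eta_y)(f(\eta-\delta_x+\delta_y)-f(\eta))$. It is reversible with respect to $\mu_{\alpha,k}(\eta)=Z_{\alpha,k}^{-1}\prod_{x}\frac{\Gamma(\alpha_x+\eta_x)}{\Gamma(\alpha_x)\eta_x!}$ (normalized), and $\mathrm{gap}_k(G,\alpha)$ denotes the second smallest eigenvalue of $-L_k$ (smallest nonzero one). The random walk ${\rm RW}(G,\alpha)$ is the Markov chain on $V$ with generator $A_\alpha f(x)=\sum_{y}c_{xy}\alpha_y(f(y)-f(x))$; note $\mathrm{gap}_1(G,\alpha)$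 equals its spectral gap. Define $\mathrm{gap}_{\rm RW}(G,\alpha):=\mathrm{gap}_1(G,\alpha)$ and $\mathrm{gap}_{\rm SIP}(G,\alpha):=\inf_{k\ge2}\mathrm{gap}_k(G,\alpha)$. *)

theory Defs
  imports Complex_Main
begin

text \<open>Vertex set V is the finite type 'v. Edge weights c, site weights alpha.
  Configurations are functions eta :: 'v => nat.\<close>

definition Xi :: "nat \<Rightarrow> ('v::finite \<Rightarrow> nat) set" where
  "Xi k = {eta. (\<Sum>x\<in>UNIV. eta x) = k}"

text \<open>eta - delta_x + delta_y (meaningful when eta x >= 1).\<close>
definition move :: "('v \<Rightarrow> nat) \<Rightarrow> 'v \<Rightarrow> 'v \<Rightarrow> ('v \<Rightarrow> nat)" where
  "move eta x y = (let eta' = eta(x := eta x - 1) in eta'(y := eta' y + 1))"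

text \<open>Generator L_k of SIP (its action does not depend on k).\<close>
definition sip_gen :: "('v::finite \<Rightarrow> 'v \<Rightarrow> real) \<Rightarrow> ('v \<Rightarrow> real)
    \<Rightarrow> (('v \<Rightarrow> nat) \<Rightarrow> real) \<Rightarrow> ('v \<Rightarrow> nat) \<Rightarrow> real" where
  "sip_gen c alpha f eta =
     (\<Sum>x\<in>UNIV. real (eta x) * (\<Sum>y\<in>UNIV. c x y * (alpha y + real (eta y))
         * (f (move eta x y) - f eta)))"

definition sip_eigenvalue :: "('v::finite \<Rightarrow> 'v \<Rightarrow> real) \<Rightarrow> ('v \<Rightarrow> real) \<Rightarrow> nat \<Rightarrow> real \<Rightarrow> bool" where
  "sip_eigenvalue c alpha k lam \<longleftrightarrow>
     (\<exists>f. (\<exists>eta\<in>Xi k. f eta \<noteq> 0) \<and>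
          (\<forall>eta\<in>Xi k. - sip_gen c alpha f eta = lam * f eta))"

text \<open>gap_k: smallest nonzero eigenvalue of -L_k (eigenvalues are real and
  nonnegative by reversibility).\<close>
definition gap :: "('v::finite \<Rightarrow> 'v \<Rightarrow> real) \<Rightarrow> ('v \<Rightarrow> real) \<Rightarrow> nat \<Rightarrow> real" where
  "gap c alpha k = Inf {lam. lam \<noteq> 0 \<and> sip_eigenvalue c alpha k lam}"

definition gap_RW :: "('v::finite \<Rightarrow> 'v \<Rightarrow> real) \<Rightarrow> ('v \<Rightarrow> real) \<Rightarrow> real" where
  "gap_RW c alpha = gap c alpha 1"

definition gap_SIP :: "('v::finite \<Rightarrow> 'v \<Rightarrow> real) \<Rightarrow> ('v \<Rightarrow> real) \<Rightarrow> real" where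
  "gap_SIP c alpha = (INF k\<in>{k. k \<ge> 2}. gap c alpha k)"

definition connected_weights :: "('v \<Rightarrow> 'v \<Rightarrow> real) \<Rightarrow> bool" where
  "connected_weights c \<longleftrightarrow> (\<forall>x y. (\<lambda>a b. c a b > 0)\<^sup>*\<^sup>* x y)"

end

theory Submission
  imports Defs "HOL-Analysis.Analysis"
begin


definition addp :: "('v \<Rightarrow> nat) \<Rightarrow> 'v \<Rightarrow> ('v \<Rightarrow> nat)" where
  "addp xi z = xi(z := Suc (xi z))"

definition Wt :: "('v::finite \<Rightarrow> real) \<Rightarrow> ('v \<Rightarrow> nat) \<Rightarrow> real" where
  "Wt alpha eta = (\<Prod>x\<in>UNIV. pochhammer (alpha x) (eta x) / fact (eta x))"

lemma finite_Xi: "finite (Xi k :: ('v::finite \<Rightarrow> nat) set)"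
proof -
  have "Xi k \<subseteq> PiE (UNIV::'v set) (\<lambda>_. {..k})"
  proof
    fix eta :: "'v \<Rightarrow> nat" assume "eta \<in> Xi k"
    hence s: "(\<Sum>x\<in>UNIV. eta x) = k" by (simp add: Xi_def)
    have "eta i \<le> (\<Sum>x\<in>UNIV. eta x)" for i by (rule member_le_sum) auto
    hence "\<forall>i. eta i \<le> k" using s by simp
    thus "eta \<in> PiE UNIV (\<lambda>_. {..k})" by (simp add: PiE_UNIV_domain)
  qed
  moreover have "finite (PiE (UNIV::'v set) (\<lambda>_. {..k}))" by (rule finite_PiE) auto
  ultimately show ?thesis by (rule finite_subset)
qed

lemma addp_apply: "real (addp xi z x) = real (xi x) + (if x = z then 1 else 0)"
  by (simp add: addp_def)

lemma addp_nat: "addp xi z x = xi x + (if x = z then 1 else 0)"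
  by (simp add: addp_def)

lemma sum_addp: "(\<Sum>x\<in>(UNIV::'v::finite set). addp xi z x) = (\<Sum>x\<in>UNIV. xi x) + 1"
  by (simp add: addp_nat sum.distrib)

lemma addp_Xi: "xi \<in> Xi k \<Longrightarrow> addp xi z \<in> Xi (Suc k)"
  by (simp add: Xi_def sum_addp)

lemma addp_inj: "addp xi z = addp xi' z \<Longrightarrow> xi = xi'"
  unfolding addp_def fun_eq_iff by (metis Suc_inject fun_upd_apply)

lemma sub_addp: "eta z \<ge> 1 \<Longrightarrow> addp (eta(z := eta z - 1)) z = eta"
  by (auto simp: addp_def fun_eq_iff)

lemma reindex:
  fixes H :: "('v::finite \<Rightarrow> nat) \<Rightarrow> real"
  shows "(\<Sum>eta\<in>Xi (Suc k). real (eta x) * H eta)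
       = (\<Sum>xi\<in>Xi k. real (Suc (xi x)) * H (addp xi x))"
proof -
  have "(\<Sum>eta\<in>Xi (Suc k). real (eta x) * H eta)
      = (\<Sum>eta\<in>{eta\<in>Xi (Suc k). eta x \<ge> 1}. real (eta x) * H eta)"
    by (rule sum.mono_neutral_right) (auto simp: finite_Xi)
  also have "\<dots> = (\<Sum>xi\<in>Xi k. real (addp xi x x) * H (addp xi x))"
  proof (rule sum.reindex_bij_betw[symmetric])
    show "bij_betw (\<lambda>xi. addp xi x) (Xi k) {eta \<in> Xi (Suc k). 1 \<le> eta x}"
      unfolding bij_betw_def
    proof
      show "inj_on (\<lambda>xi. addp xi x) (Xi k)" by (auto intro: inj_onI addp_inj)
      show "(\<lambda>xi. addp xi x) ` Xi k = {eta \<in> Xi (Suc k). 1 \<le> eta x}"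
      proof
        show "(\<lambda>xi. addp xi x) ` Xi k \<subseteq> {eta \<in> Xi (Suc k). 1 \<le> eta x}"
          using addp_Xi by (auto simp: addp_nat)
        show "{eta \<in> Xi (Suc k). 1 \<le> eta x} \<subseteq> (\<lambda>xi. addp xi x) ` Xi k"
        proof
          fix eta assume e: "eta \<in> {eta \<in> Xi (Suc k). 1 \<le> eta x}"
          let ?xi = "eta(x := eta x - 1)"
          have "addp ?xi x = eta" using e sub_addp[of eta x] by simp
          moreover have "?xi \<in> Xi k"
          proof -
            have "(\<Sum>y\<in>UNIV. addp ?xi x y) = Suc k" using e \<open>addp ?xi x = eta\<close> by (simp add: Xi_def)
            thus ?thesis by (simp add: sum_addp Xi_def)
          qed
          ultimately show "eta \<in> (\<lambda>xi. addp xi x) ` Xi k" by force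
        qed
      qed
    qed
  qed
  also have "\<dots> = (\<Sum>xi\<in>Xi k. real (Suc (xi x)) * H (addp xi x))"
    by (simp add: addp_def)
  finally show ?thesis .
qed


lemma Wt_pos: "(\<And>x. alpha x > 0) \<Longrightarrow> Wt alpha eta > 0"
  unfolding Wt_def by (intro prod_pos divide_pos_pos pochhammer_pos) auto

lemma aux_cancel: "(d::real) > 0 \<Longrightarrow> X / (d * F) * d = X / F"
  by (cases "F = 0") (simp_all add: field_simps)

lemma Wt_addp:
  fixes alpha :: "'v::finite \<Rightarrow> real"
  shows "Wt alpha (addp xi z) * real (Suc (xi z)) = Wt alpha xi * (alpha z + real (xi z))"
proof -
  let ?P = "\<lambda>eta x. pochhammer (alpha x) (eta x) / fact (eta x)"
  have "Wt alpha (addp xi z) = ?P (addp xi z) z * (\<Prod>x\<in>UNIV-{z}. ?P (addp xi z) x)"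
    unfolding Wt_def by (simp add: prod.remove)
  also have "(\<Prod>x\<in>UNIV-{z}. ?P (addp xi z) x) = (\<Prod>x\<in>UNIV-{z}. ?P xi x)"
    by (rule prod.cong) (auto simp: addp_def)
  finally have 1: "Wt alpha (addp xi z) = ?P (addp xi z) z * (\<Prod>x\<in>UNIV-{z}. ?P xi x)" .
  have 2: "Wt alpha xi = ?P xi z * (\<Prod>x\<in>UNIV-{z}. ?P xi x)"
    unfolding Wt_def by (simp add: prod.remove)
  have 3: "?P (addp xi z) z * real (Suc (xi z)) = ?P xi z * (alpha z + real (xi z))"
  proof -
    have f: "(fact (xi z)::real) > 0" by simp
    have n: "real (Suc (xi z)) > 0" by simp
    have a: "addp xi z z = Suc (xi z)" by (simp add: addp_def)
    have "?P (addp xi z) z = pochhammer (alpha z) (Suc (xi z)) / fact (Suc (xi z))"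
      by (simp only: a)
    also have "\<dots> = pochhammer (alpha z) (xi z) * (alpha z + real (xi z)) / (real (Suc (xi z)) * fact (xi z))"
      by (simp only: pochhammer_Suc fact_Suc of_nat_mult)
    finally have "?P (addp xi z) z * real (Suc (xi z)) = pochhammer (alpha z) (xi z) * (alpha z + real (xi z)) / (real (Suc (xi z)) * fact (xi z)) * real (Suc (xi z))"
      by simp
    also have "\<dots> = pochhammer (alpha z) (xi z) * (alpha z + real (xi z)) / fact (xi z)"
      using n by (rule aux_cancel)
    also have "\<dots> = ?P xi z * (alpha z + real (xi z))" by simp
    finally show ?thesis .
  qed
  let ?R = "(\<Prod>x\<in>UNIV-{z}. ?P xi x)"
  have "Wt alpha (addp xi z) * real (Suc (xi z)) = (?P (addp xi z) z * real (Suc (xi z))) * ?R"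
    unfolding 1 by (simp only: mult_ac)
  also have "\<dots> = (?P xi z * (alpha z + real (xi z))) * ?R" by (simp only: 3)
  also have "\<dots> = Wt alpha xi * (alpha z + real (xi z))" unfolding 2 by (simp only: mult_ac)
  finally show ?thesis .
qed

lemma move_addp: "move (addp xi x) x y = addp xi y"
  by (auto simp: move_def addp_def fun_eq_iff Let_def)

lemma symm_sum:
  fixes K :: "'v::finite \<Rightarrow> 'v \<Rightarrow> real"
  assumes "\<And>x y. K x y = K y x"
  shows "(\<Sum>x\<in>UNIV. \<Sum>y\<in>UNIV. K x y * u x * (u y - u x))
       = -(1/2) * (\<Sum>x\<in>UNIV. \<Sum>y\<in>UNIV. K x y * (u y - u x)^2)"
proof -
  let ?S = "(\<Sum>x\<in>UNIV. \<Sum>y\<in>UNIV. K x y * u x * (u y - u x))"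
  have "?S = (\<Sum>y\<in>UNIV. \<Sum>x\<in>UNIV. K x y * u x * (u y - u x))" by (rule sum.swap)
  also have "\<dots> = (\<Sum>x\<in>UNIV. \<Sum>y\<in>UNIV. K x y * u y * (u x - u y))"
    by (simp add: assms)
  finally have "2 * ?S = (\<Sum>x\<in>UNIV. \<Sum>y\<in>UNIV. K x y * u x * (u y - u x))
      + (\<Sum>x\<in>UNIV. \<Sum>y\<in>UNIV. K x y * u y * (u x - u y))" by simp
  also have "\<dots> = (\<Sum>x\<in>UNIV. \<Sum>y\<in>UNIV. - (K x y * (u y - u x)^2))"
    by (simp add: sum.distrib[symmetric] power2_eq_square algebra_simps)
  finally show ?thesis by (simp add: sum_negf)
qed

lemma dirichlet:
  fixes c :: "'v::finite \<Rightarrow> 'v \<Rightarrow> real" and alpha :: "'v \<Rightarrow> real"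
  assumes sym: "\<And>x y. c x y = c y x"
  shows "(\<Sum>eta\<in>Xi (Suc k). Wt alpha eta * f eta * sip_gen c alpha f eta)
     = -(1/2) * (\<Sum>xi\<in>Xi k. Wt alpha xi * (\<Sum>x\<in>UNIV. \<Sum>y\<in>UNIV.
          c x y * (alpha x + real (xi x)) * (alpha y + real (xi y)) * (f (addp xi y) - f (addp xi x))^2))"
proof -
  have "(\<Sum>eta\<in>Xi (Suc k). Wt alpha eta * f eta * sip_gen c alpha f eta)
     = (\<Sum>x\<in>UNIV. \<Sum>eta\<in>Xi (Suc k). real (eta x) * (Wt alpha eta * f eta *
          (\<Sum>y\<in>UNIV. c x y * (alpha y + real (eta y)) * (f (move eta x y) - f eta))))"
    unfolding sip_gen_def by (subst sum.swap) (simp add: sum_distrib_left algebra_simps)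
  also have "\<dots> = (\<Sum>x\<in>UNIV. \<Sum>xi\<in>Xi k. real (Suc (xi x)) * (Wt alpha (addp xi x) * f (addp xi x) *
          (\<Sum>y\<in>UNIV. c x y * (alpha y + real (addp xi x y)) * (f (move (addp xi x) x y) - f (addp xi x)))))"
    by (simp only: reindex)
  also have "\<dots> = (\<Sum>x\<in>UNIV. \<Sum>xi\<in>Xi k. Wt alpha xi * 
          (\<Sum>y\<in>UNIV. c x y * (alpha x + real (xi x)) * (alpha y + real (xi y)) * f (addp xi x) * (f (addp xi y) - f (addp xi x))))"
  proof (intro sum.cong refl)
    fix x xi
    have e: "(alpha y + real (addp xi x y)) * (f (move (addp xi x) x y) - f (addp xi x))
        = (alpha y + real (xi y)) * (f (addp xi y) - f (addp xi x))" for y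
      unfolding move_addp by (cases "y = x") (auto simp: addp_def)
    have "real (Suc (xi x)) * (Wt alpha (addp xi x) * f (addp xi x) *
          (\<Sum>y\<in>UNIV. c x y * (alpha y + real (addp xi x y)) * (f (move (addp xi x) x y) - f (addp xi x))))
        = (Wt alpha (addp xi x) * real (Suc (xi x))) * f (addp xi x) *
          (\<Sum>y\<in>UNIV. c x y * ((alpha y + real (addp xi x y)) * (f (move (addp xi x) x y) - f (addp xi x))))"
      by (simp add: algebra_simps)
    also have "\<dots> = (Wt alpha xi * (alpha x + real (xi x))) * f (addp xi x) *
          (\<Sum>y\<in>UNIV. c x y * ((alpha y + real (xi y)) * (f (addp xi y) - f (addp xi x))))"
      by (simp only: e Wt_addp)
    also have "\<dots> = Wt alpha xi * 
          (\<Sum>y\<in>UNIV. c x y * (alpha x + real (xi x)) * (alpha y + real (xi y)) * f (addp xi x) * (f (addp xi y) - f (addp xi x)))"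
      by (simp add: sum_distrib_left algebra_simps)
    finally show "real (Suc (xi x)) * (Wt alpha (addp xi x) * f (addp xi x) *
          (\<Sum>y\<in>UNIV. c x y * (alpha y + real (addp xi x y)) * (f (move (addp xi x) x y) - f (addp xi x))))
        = Wt alpha xi * 
          (\<Sum>y\<in>UNIV. c x y * (alpha x + real (xi x)) * (alpha y + real (xi y)) * f (addp xi x) * (f (addp xi y) - f (addp xi x)))" .
  qed
  also have "\<dots> = (\<Sum>xi\<in>Xi k. Wt alpha xi * (\<Sum>x\<in>UNIV. \<Sum>y\<in>UNIV.
          (c x y * (alpha x + real (xi x)) * (alpha y + real (xi y))) * f (addp xi x) * (f (addp xi y) - f (addp xi x))))"
    by (subst sum.swap) (simp add: sum_distrib_left)
  also have "\<dots> = (\<Sum>xi\<in>Xi k. Wt alpha xi * (-(1/2) * (\<Sum>x\<in>UNIV. \<Sum>y\<in>UNIV.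
          (c x y * (alpha x + real (xi x)) * (alpha y + real (xi y))) * (f (addp xi y) - f (addp xi x))^2)))"
  proof (rule sum.cong[OF refl])
    fix xi
    let ?K = "\<lambda>x y. c x y * (alpha x + real (xi x)) * (alpha y + real (xi y))"
    have K: "\<And>x y. ?K x y = ?K y x" by (simp add: sym algebra_simps)
    show "Wt alpha xi * (\<Sum>x\<in>UNIV. \<Sum>y\<in>UNIV. ?K x y * f (addp xi x) * (f (addp xi y) - f (addp xi x)))
      = Wt alpha xi * (-(1/2) * (\<Sum>x\<in>UNIV. \<Sum>y\<in>UNIV. ?K x y * (f (addp xi y) - f (addp xi x))^2))"
      using symm_sum[OF K, where u="\<lambda>x. f (addp xi x)"] by simp
  qed
  also have "\<dots> = -(1/2) * (\<Sum>xi\<in>Xi k. Wt alpha xi * (\<Sum>x\<in>UNIV. \<Sum>y\<in>UNIV.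
          c x y * (alpha x + real (xi x)) * (alpha y + real (xi y)) * (f (addp xi y) - f (addp xi x))^2))"
    by (simp add: sum_distrib_left algebra_simps)
  finally show ?thesis .
qed

lemma normsq:
  fixes alpha :: "'v::finite \<Rightarrow> real"
  shows "real (Suc k) * (\<Sum>eta\<in>Xi (Suc k). Wt alpha eta * (f eta)^2)
     = (\<Sum>xi\<in>Xi k. Wt alpha xi * (\<Sum>x\<in>UNIV. (alpha x + real (xi x)) * (f (addp xi x))^2))"
proof -
  have "real (Suc k) * (\<Sum>eta\<in>Xi (Suc k). Wt alpha eta * (f eta)^2)
      = (\<Sum>eta\<in>Xi (Suc k). (\<Sum>x\<in>UNIV. real (eta x)) * (Wt alpha eta * (f eta)^2))"
    unfolding sum_distrib_left
  proof (intro sum.cong refl)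
    fix eta :: "'v \<Rightarrow> nat" assume "eta \<in> Xi (Suc k)"
    hence "(\<Sum>x\<in>UNIV. real (eta x)) = real (Suc k)" by (simp add: Xi_def flip: of_nat_sum)
    thus "real (Suc k) * (Wt alpha eta * (f eta)^2) = (\<Sum>x\<in>UNIV. real (eta x)) * (Wt alpha eta * (f eta)^2)" by simp
  qed
  also have "\<dots> = (\<Sum>x\<in>UNIV. \<Sum>eta\<in>Xi (Suc k). real (eta x) * (Wt alpha eta * (f eta)^2))"
    by (simp add: sum_distrib_right sum.swap[of _ "Xi (Suc k)"])
  also have "\<dots> = (\<Sum>x\<in>UNIV. \<Sum>xi\<in>Xi k. real (Suc (xi x)) * (Wt alpha (addp xi x) * (f (addp xi x))^2))"
    by (simp only: reindex)
  also have "\<dots> = (\<Sum>x\<in>UNIV. \<Sum>xi\<in>Xi k. Wt alpha xi * ((alpha x + real (xi x)) * (f (addp xi x))^2))"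
  proof (intro sum.cong refl)
    fix x xi
    show "real (Suc (xi x)) * (Wt alpha (addp xi x) * (f (addp xi x))^2)
        = Wt alpha xi * ((alpha x + real (xi x)) * (f (addp xi x))^2)"
    proof -
      have "real (Suc (xi x)) * (Wt alpha (addp xi x) * (f (addp xi x))^2)
         = (Wt alpha (addp xi x) * real (Suc (xi x))) * (f (addp xi x))^2" by (simp add: algebra_simps)
      also have "\<dots> = (Wt alpha xi * (alpha x + real (xi x))) * (f (addp xi x))^2" by (simp only: Wt_addp)
      finally show ?thesis by (simp add: algebra_simps)
    qed
  qed
  also have "\<dots> = (\<Sum>xi\<in>Xi k. Wt alpha xi * (\<Sum>x\<in>UNIV. (alpha x + real (xi x)) * (f (addp xi x))^2))"
    by (subst sum.swap) (simp add: sum_distrib_left)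
  finally show ?thesis .
qed



definition astar :: "('v::finite \<Rightarrow> real) \<Rightarrow> (('v \<Rightarrow> nat) \<Rightarrow> real) \<Rightarrow> ('v \<Rightarrow> nat) \<Rightarrow> real" where
  "astar alpha g xi = (\<Sum>z\<in>UNIV. (alpha z + real (xi z)) * g (addp xi z))"

definition Tm :: "('v \<Rightarrow> real) \<Rightarrow> (('v \<Rightarrow> nat) \<Rightarrow> real) \<Rightarrow> ('v \<Rightarrow> nat) \<Rightarrow> 'v \<Rightarrow> 'v \<Rightarrow> real" where
  "Tm alpha g eta x y = real (eta x) * (alpha y + real (eta y)) * (g (move eta x y) - g eta)"

lemma pmul: "(n \<noteq> 0 \<Longrightarrow> X = Y) \<Longrightarrow> real n * X = real n * Y"
  by (cases "n = 0") auto

lemma Tm_diag: "Tm alpha g eta x x = 0"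
  by (cases "eta x = 0") (auto simp: Tm_def move_def Let_def)

lemma pair_identity:
  fixes alpha :: "'v::finite \<Rightarrow> real"
  shows "Tm alpha (astar alpha g) xi x y + Tm alpha (astar alpha g) xi y x
    = (\<Sum>z\<in>UNIV. (alpha z + real (xi z)) * (Tm alpha g (addp xi z) x y + Tm alpha g (addp xi z) y x))"
proof (cases "x = y")
  case True
  thus ?thesis by (simp add: Tm_diag)
next
  case xy: False
  define p where "p = xi x"
  define q where "q = xi y"
  define m where "m = move xi x y"
  define m' where "m' = move xi y x"
  define w where "w = (\<lambda>z. alpha z + real (xi z))"
  define Phi where "Phi = (\<lambda>z.
      real p * (alpha y + real q) * ((alpha z + real (m z)) * g (addp m z) - w z * g (addp xi z))
    + real q * (alpha x + real p) * ((alpha z + real (m' z)) * g (addp m' z) - w z * g (addp xi z))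
    - w z * (Tm alpha g (addp xi z) x y + Tm alpha g (addp xi z) y x))"
  have L: "Tm alpha (astar alpha g) xi x y + Tm alpha (astar alpha g) xi y x
    - (\<Sum>z\<in>UNIV. (alpha z + real (xi z)) * (Tm alpha g (addp xi z) x y + Tm alpha g (addp xi z) y x))
    = (\<Sum>z\<in>UNIV. Phi z)"
    unfolding Phi_def Tm_def[of alpha "astar alpha g"] astar_def p_def q_def m_def m'_def w_def
    by (simp add: sum_subtractf sum.distrib sum_distrib_left algebra_simps)
  have Z: "Phi z = 0" if "z \<noteq> x" "z \<noteq> y" for z
  proof -
    have "m z = xi z" "m' z = xi z" using that by (auto simp: m_def m'_def move_def Let_def)
    moreover have "move (addp xi z) x y = addp m z" "move (addp xi z) y x = addp m' z"
      using that xy by (auto simp: m_def m'_def move_def Let_def addp_def fun_eq_iff)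
    moreover have "addp xi z x = p" "addp xi z y = q" using that by (auto simp: addp_def p_def q_def)
    ultimately show ?thesis unfolding Phi_def Tm_def w_def by (simp add: algebra_simps)
  qed
  define A where "A = g (addp xi x)"
  define B where "B = g (addp xi y)"
  define C where "C = g (move (addp xi y) x y)"
  define D where "D = g (move (addp xi x) y x)"
  have T1: "Tm alpha g (addp xi x) x y = real (Suc p) * (alpha y + real q) * (B - A)"
    using xy unfolding Tm_def move_addp by (simp add: A_def B_def addp_def p_def q_def)
  have T2: "Tm alpha g (addp xi x) y x = real q * (alpha x + real (Suc p)) * (D - A)"
    using xy by (simp add: Tm_def D_def A_def addp_def p_def q_def)
  have T3: "Tm alpha g (addp xi y) x y = real p * (alpha y + real (Suc q)) * (C - B)"
    using xy by (simp add: Tm_def C_def B_def addp_def p_def q_def)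
  have T4: "Tm alpha g (addp xi y) y x = real (Suc q) * (alpha x + real p) * (A - B)"
    using xy unfolding Tm_def move_addp by (simp add: A_def B_def addp_def p_def q_def)
  have P1: "real p * ((alpha x + real (m x)) * g (addp m x) - w x * A + ((alpha y + real (m y)) * g (addp m y) - w y * B))
      = real p * ((alpha x + real p - 1) * B - w x * A + ((alpha y + real q + 1) * C - w y * B))"
  proof (rule pmul)
    assume "p \<noteq> 0"
    hence "m x = p - 1" "m y = Suc q" "addp m x = addp xi y" "addp m y = move (addp xi y) x y"
      using xy by (auto simp: m_def move_def Let_def addp_def fun_eq_iff p_def q_def)
    thus "((alpha x + real (m x)) * g (addp m x) - w x * A + ((alpha y + real (m y)) * g (addp m y) - w y * B))
      = ((alpha x + real p - 1) * B - w x * A + ((alpha y + real q + 1) * C - w y * B))"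
      using \<open>p \<noteq> 0\<close> by (simp add: B_def C_def of_nat_diff algebra_simps)
  qed
  have P2: "real q * ((alpha x + real (m' x)) * g (addp m' x) - w x * A + ((alpha y + real (m' y)) * g (addp m' y) - w y * B))
      = real q * ((alpha x + real p + 1) * D - w x * A + ((alpha y + real q - 1) * A - w y * B))"
  proof (rule pmul)
    assume "q \<noteq> 0"
    hence "m' y = q - 1" "m' x = Suc p" "addp m' y = addp xi x" "addp m' x = move (addp xi x) y x"
      using xy by (auto simp: m'_def move_def Let_def addp_def fun_eq_iff p_def q_def)
    thus "((alpha x + real (m' x)) * g (addp m' x) - w x * A + ((alpha y + real (m' y)) * g (addp m' y) - w y * B))
      = ((alpha x + real p + 1) * D - w x * A + ((alpha y + real q - 1) * A - w y * B))"
      using \<open>q \<noteq> 0\<close> by (simp add: A_def D_def of_nat_diff algebra_simps)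
  qed
  have wx: "w x = alpha x + real p" and wy: "w y = alpha y + real q" by (simp_all add: w_def p_def q_def)
  have XY: "Phi x + Phi y = 0"
  proof -
    have "Phi x + Phi y = (alpha y + real q) * (real p * ((alpha x + real (m x)) * g (addp m x) - w x * A + ((alpha y + real (m y)) * g (addp m y) - w y * B)))
       + (alpha x + real p) * (real q * ((alpha x + real (m' x)) * g (addp m' x) - w x * A + ((alpha y + real (m' y)) * g (addp m' y) - w y * B)))
       - w x * (Tm alpha g (addp xi x) x y + Tm alpha g (addp xi x) y x)
       - w y * (Tm alpha g (addp xi y) x y + Tm alpha g (addp xi y) y x)"
      unfolding Phi_def A_def B_def by (simp add: algebra_simps)
    also have "\<dots> = 0" unfolding P1 P2 T1 T2 T3 T4 unfolding wx wy by (simp add: algebra_simps)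
    finally show ?thesis .
  qed
  have "(\<Sum>z\<in>UNIV. Phi z) = Phi x + (\<Sum>z\<in>UNIV-{x}. Phi z)"
    by (simp add: sum.remove)
  also have "(\<Sum>z\<in>UNIV-{x}. Phi z) = Phi y + (\<Sum>z\<in>UNIV-{x}-{y}. Phi z)"
    using xy by (subst sum.remove[of _ y]) auto
  also have "(\<Sum>z\<in>UNIV-{x}-{y}. Phi z) = 0" using Z by (intro sum.neutral) auto
  finally have "(\<Sum>z\<in>UNIV. Phi z) = 0" using XY by simp
  with L show ?thesis by simp
qed


lemma sip_gen_Tm: "sip_gen c alpha g eta = (\<Sum>x\<in>UNIV. \<Sum>y\<in>UNIV. c x y * Tm alpha g eta x y)"
  unfolding sip_gen_def Tm_def by (simp add: sum_distrib_left algebra_simps)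

lemma sip_gen_sym:
  assumes sym: "\<And>x y. c x y = c y x"
  shows "sip_gen c alpha g eta = (1/2) * (\<Sum>x\<in>UNIV. \<Sum>y\<in>UNIV. c x y * (Tm alpha g eta x y + Tm alpha g eta y x))"
proof -
  have "(\<Sum>x\<in>UNIV. \<Sum>y\<in>UNIV. c x y * Tm alpha g eta y x) = (\<Sum>y\<in>UNIV. \<Sum>x\<in>UNIV. c x y * Tm alpha g eta y x)"
    by (rule sum.swap)
  also have "\<dots> = sip_gen c alpha g eta" unfolding sip_gen_Tm by (simp add: sym)
  finally show ?thesis unfolding distrib_left sum.distrib by (simp add: sip_gen_Tm)
qed

lemma triple_swap: "(\<Sum>x\<in>A. \<Sum>y\<in>B. \<Sum>z\<in>C. f x y z) = (\<Sum>z\<in>C. \<Sum>x\<in>A. \<Sum>y\<in>B. f x y z)"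
proof -
  have "(\<Sum>x\<in>A. \<Sum>y\<in>B. \<Sum>z\<in>C. f x y z) = (\<Sum>x\<in>A. \<Sum>z\<in>C. \<Sum>y\<in>B. f x y z)"
    by (rule sum.cong[OF refl]) (rule sum.swap)
  also have "\<dots> = (\<Sum>z\<in>C. \<Sum>x\<in>A. \<Sum>y\<in>B. f x y z)" by (rule sum.swap)
  finally show ?thesis .
qed

lemma intertwine:
  fixes c :: "'v::finite \<Rightarrow> 'v \<Rightarrow> real"
  assumes sym: "\<And>x y. c x y = c y x"
  shows "sip_gen c alpha (astar alpha g) xi = (\<Sum>z\<in>UNIV. (alpha z + real (xi z)) * sip_gen c alpha g (addp xi z))"
proof -
  have "sip_gen c alpha (astar alpha g) xi = (1/2) * (\<Sum>x\<in>UNIV. \<Sum>y\<in>UNIV. c x y *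
     (\<Sum>z\<in>UNIV. (alpha z + real (xi z)) * (Tm alpha g (addp xi z) x y + Tm alpha g (addp xi z) y x)))"
    by (simp add: sip_gen_sym[OF sym] pair_identity)
  also have "\<dots> = (\<Sum>z\<in>UNIV. (alpha z + real (xi z)) * ((1/2) * (\<Sum>x\<in>UNIV. \<Sum>y\<in>UNIV. c x y *
     (Tm alpha g (addp xi z) x y + Tm alpha g (addp xi z) y x))))"
  proof -
    let ?F = "\<lambda>x y z. (alpha z + real (xi z)) * (c x y * (Tm alpha g (addp xi z) x y + Tm alpha g (addp xi z) y x))"
    have "(\<Sum>x\<in>UNIV. \<Sum>y\<in>UNIV. c x y *
     (\<Sum>z\<in>UNIV. (alpha z + real (xi z)) * (Tm alpha g (addp xi z) x y + Tm alpha g (addp xi z) y x)))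
      = (\<Sum>x\<in>UNIV. \<Sum>y\<in>UNIV. \<Sum>z\<in>UNIV. ?F x y z)"
      by (simp add: sum_distrib_left mult_ac)
    also have "\<dots> = (\<Sum>z\<in>UNIV. \<Sum>x\<in>UNIV. \<Sum>y\<in>UNIV. ?F x y z)" by (rule triple_swap)
    also have "\<dots> = (\<Sum>z\<in>UNIV. (alpha z + real (xi z)) * (\<Sum>x\<in>UNIV. \<Sum>y\<in>UNIV. c x y *
     (Tm alpha g (addp xi z) x y + Tm alpha g (addp xi z) y x)))"
      by (simp add: sum_distrib_left mult_ac)
    finally show ?thesis by (simp add: sum_distrib_left mult_ac)
  qed
  also have "\<dots> = (\<Sum>z\<in>UNIV. (alpha z + real (xi z)) * sip_gen c alpha g (addp xi z))"
    by (simp add: sip_gen_sym[OF sym])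
  finally show ?thesis .
qed



definition RWgen :: "('v::finite \<Rightarrow> 'v \<Rightarrow> real) \<Rightarrow> ('v \<Rightarrow> real) \<Rightarrow> ('v \<Rightarrow> real) \<Rightarrow> 'v \<Rightarrow> real" where
  "RWgen c alpha g x = (\<Sum>y\<in>UNIV. c x y * alpha y * (g y - g x))"

definition Dform :: "('v::finite \<Rightarrow> 'v \<Rightarrow> real) \<Rightarrow> ('v \<Rightarrow> real) \<Rightarrow> ('v \<Rightarrow> real) \<Rightarrow> real" where
  "Dform c alpha g = (1/2) * (\<Sum>x\<in>UNIV. \<Sum>y\<in>UNIV. c x y * alpha x * alpha y * (g x - g y)^2)"

definition DB :: "('v::finite \<Rightarrow> 'v \<Rightarrow> real) \<Rightarrow> ('v \<Rightarrow> real) \<Rightarrow> ('v \<Rightarrow> real) \<Rightarrow> ('v \<Rightarrow> real) \<Rightarrow> real" where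
  "DB c alpha g h = (1/2) * (\<Sum>x\<in>UNIV. \<Sum>y\<in>UNIV. c x y * alpha x * alpha y * (g x - g y) * (h x - h y))"

definition Nform :: "('v::finite \<Rightarrow> real) \<Rightarrow> ('v \<Rightarrow> real) \<Rightarrow> real" where
  "Nform alpha g = (\<Sum>x\<in>UNIV. alpha x * (g x)^2)"

lemma Dform_expand:
  "Dform c alpha (\<lambda>x. g x + t * h x) = Dform c alpha g + 2 * t * DB c alpha g h + t^2 * Dform c alpha h"
proof -
  have pt: "c x y * alpha x * alpha y * ((g x + t * h x) - (g y + t * h y))^2
     = c x y * alpha x * alpha y * (g x - g y)^2 + 2 * t * (c x y * alpha x * alpha y * (g x - g y) * (h x - h y))
       + t^2 * (c x y * alpha x * alpha y * (h x - h y)^2)" for x y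
    by (simp add: power2_eq_square algebra_simps)
  have "(\<Sum>x\<in>UNIV. \<Sum>y\<in>UNIV. c x y * alpha x * alpha y * (g x - g y)^2 + 2 * t * (c x y * alpha x * alpha y * (g x - g y) * (h x - h y))
       + t^2 * (c x y * alpha x * alpha y * (h x - h y)^2))
     = (\<Sum>x\<in>UNIV. \<Sum>y\<in>UNIV. c x y * alpha x * alpha y * (g x - g y)^2) + 2 * t * (\<Sum>x\<in>UNIV. \<Sum>y\<in>UNIV. c x y * alpha x * alpha y * (g x - g y) * (h x - h y))
       + t^2 * (\<Sum>x\<in>UNIV. \<Sum>y\<in>UNIV. c x y * alpha x * alpha y * (h x - h y)^2)"
    by (simp add: sum.distrib sum_distrib_left)
  thus ?thesis unfolding Dform_def DB_def pt by (simp add: algebra_simps)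
qed

lemma Nform_expand:
  "Nform alpha (\<lambda>x. g x + t * h x) = Nform alpha g + 2 * t * (\<Sum>x\<in>UNIV. alpha x * g x * h x) + t^2 * Nform alpha h"
proof -
  have "Nform alpha (\<lambda>x. g x + t * h x) = (\<Sum>x\<in>UNIV. alpha x * (g x)^2 + 2 * t * (alpha x * g x * h x) + t^2 * (alpha x * (h x)^2))"
    unfolding Nform_def by (intro sum.cong refl) (simp add: power2_eq_square algebra_simps)
  thus ?thesis unfolding Nform_def by (simp add: sum.distrib sum_distrib_left algebra_simps)
qed

lemma antisym_sum:
  fixes K :: "'v::finite \<Rightarrow> 'v \<Rightarrow> real"
  assumes "\<And>x y. K x y = K y x"
  shows "(\<Sum>x\<in>UNIV. \<Sum>y\<in>UNIV. K x y * (g y - g x)) = 0"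
proof -
  let ?S = "(\<Sum>x\<in>UNIV. \<Sum>y\<in>UNIV. K x y * (g y - g x))"
  have "?S = (\<Sum>y\<in>UNIV. \<Sum>x\<in>UNIV. K x y * (g y - g x))" by (rule sum.swap)
  also have "\<dots> = - ?S" by (simp add: assms sum_negf[symmetric] algebra_simps)
  finally show ?thesis by simp
qed

lemma DB_RWgen:
  assumes sym: "\<And>x y. c x y = c y x"
  shows "DB c alpha g h = - (\<Sum>x\<in>UNIV. alpha x * h x * RWgen c alpha g x)"
proof -
  let ?K = "\<lambda>x y. c x y * alpha x * alpha y"
  have K: "?K x y = ?K y x" for x y by (simp add: sym mult_ac)
  have "(\<Sum>x\<in>UNIV. \<Sum>y\<in>UNIV. ?K x y * (g x - g y) * h y) = (\<Sum>y\<in>UNIV. \<Sum>x\<in>UNIV. ?K x y * (g x - g y) * h y)"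
    by (rule sum.swap)
  also have "\<dots> = (\<Sum>x\<in>UNIV. \<Sum>y\<in>UNIV. - (?K x y * (g x - g y) * h x))"
    by (intro sum.cong refl) (simp add: sym algebra_simps)
  also have "\<dots> = - (\<Sum>x\<in>UNIV. \<Sum>y\<in>UNIV. ?K x y * (g x - g y) * h x)"
    by (simp add: sum_negf)
  finally have 1: "(\<Sum>x\<in>UNIV. \<Sum>y\<in>UNIV. ?K x y * (g x - g y) * h y) = - (\<Sum>x\<in>UNIV. \<Sum>y\<in>UNIV. ?K x y * (g x - g y) * h x)" .
  have "DB c alpha g h = (1/2) * ((\<Sum>x\<in>UNIV. \<Sum>y\<in>UNIV. ?K x y * (g x - g y) * h x) - (\<Sum>x\<in>UNIV. \<Sum>y\<in>UNIV. ?K x y * (g x - g y) * h y))"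
    unfolding DB_def by (simp add: sum_subtractf[symmetric] algebra_simps)
  also have "\<dots> = (\<Sum>x\<in>UNIV. \<Sum>y\<in>UNIV. ?K x y * (g x - g y) * h x)" unfolding 1 by simp
  also have "\<dots> = - (\<Sum>x\<in>UNIV. alpha x * h x * RWgen c alpha g x)"
    unfolding RWgen_def by (simp add: sum_distrib_left sum_negf[symmetric] algebra_simps)
  finally show ?thesis .
qed

lemma sum_RWgen:
  assumes sym: "\<And>x y. c x y = c y x"
  shows "(\<Sum>x\<in>UNIV. alpha x * RWgen c alpha g x) = 0"
proof -
  have "(\<Sum>x\<in>UNIV. alpha x * RWgen c alpha g x) = (\<Sum>x\<in>UNIV. \<Sum>y\<in>UNIV. (c x y * alpha x * alpha y) * (g y - g x))"
    unfolding RWgen_def by (simp add: sum_distrib_left mult_ac)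
  also have "\<dots> = 0" by (rule antisym_sum) (simp add: sym mult_ac)
  finally show ?thesis .
qed

lemma quad_zero:
  fixes B C :: real
  assumes "\<And>t. 2 * t * B + t^2 * C \<ge> 0"
  shows "B = 0"
proof (rule ccontr)
  assume B: "B \<noteq> 0"
  define M where "M = \<bar>C\<bar> + 1"
  define t where "t = - B / M"
  have pos: "M > 0" by (simp add: M_def)
  have e1: "2*t*B = -2*(B^2/M)" unfolding t_def by (simp add: power2_eq_square)
  have e2: "t^2 * M = B^2/M" unfolding t_def using pos by (simp add: power2_eq_square)
  have "t^2*C \<le> t^2*M" by (rule mult_left_mono) (auto simp: M_def)
  moreover have "B^2/M > 0" using B pos by simp
  ultimately have "2 * t * B + t^2 * C < 0" using e1 e2 by linarith
  with assms[of t] show False by simp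
qed


definition lift :: "('v::finite \<Rightarrow> real) \<Rightarrow> ('v \<Rightarrow> nat) \<Rightarrow> real" where
  "lift g eta = (\<Sum>x\<in>UNIV. real (eta x) * g x)"

lemma ifmult: "(if P then (a::real) else b) * c = (if P then a * c else b * c)" by simp

lemma sum_delta_real: "(\<Sum>x\<in>(UNIV::'v::finite set). (if x = z then (a::real) else 0) * F x) = a * F z"
proof -
  have "(\<Sum>x\<in>(UNIV::'v set). (if x = z then (a::real) else 0) * F x) = (\<Sum>x\<in>UNIV. if x = z then a * F x else 0)"
    by (intro sum.cong refl) simp
  thus ?thesis by (simp add: sum.delta)
qed

lemma lift_addp: "lift g (addp xi z) = lift g xi + g z"
proof -
  have "lift g (addp xi z) = (\<Sum>x\<in>UNIV. real (xi x) * g x + (if x = z then 1 else 0) * g x)"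
    unfolding lift_def addp_apply by (intro sum.cong refl) (simp add: algebra_simps)
  thus ?thesis unfolding lift_def sum.distrib sum_delta_real by simp
qed

lemma lift_move: "real (eta x) * (lift g (move eta x y) - lift g eta) = real (eta x) * (g y - g x)"
proof (rule pmul)
  assume "eta x \<noteq> 0"
  define z where "z = eta(x := eta x - 1)"
  have e: "eta = addp z x" unfolding z_def using sub_addp[of eta x] \<open>eta x \<noteq> 0\<close> by simp
  show "lift g (move eta x y) - lift g eta = g y - g x"
    unfolding e move_addp lift_addp by simp
qed

lemma lift_eigen:
  fixes c :: "'v::finite \<Rightarrow> 'v \<Rightarrow> real"
  assumes sym: "\<And>x y. c x y = c y x"
    and eig: "\<And>x. RWgen c alpha g x = - rho * g x"
  shows "sip_gen c alpha (lift g) eta = - rho * lift g eta"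
proof -
  have "sip_gen c alpha (lift g) eta = (\<Sum>x\<in>UNIV. \<Sum>y\<in>UNIV. c x y * (alpha y + real (eta y)) * (real (eta x) * (lift g (move eta x y) - lift g eta)))"
    unfolding sip_gen_def by (simp add: sum_distrib_left mult_ac)
  also have "\<dots> = (\<Sum>x\<in>UNIV. \<Sum>y\<in>UNIV. c x y * (alpha y + real (eta y)) * (real (eta x) * (g y - g x)))"
    by (simp only: lift_move)
  also have "\<dots> = (\<Sum>x\<in>UNIV. real (eta x) * RWgen c alpha g x) + (\<Sum>x\<in>UNIV. \<Sum>y\<in>UNIV. (c x y * real (eta x) * real (eta y)) * (g y - g x))"
    unfolding RWgen_def by (simp add: sum_distrib_left sum.distrib[symmetric] algebra_simps)
  also have "(\<Sum>x\<in>UNIV. \<Sum>y\<in>UNIV. (c x y * real (eta x) * real (eta y)) * (g y - g x)) = 0"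
    by (rule antisym_sum) (simp add: sym mult_ac)
  finally show ?thesis unfolding lift_def eig by (simp add: sum_distrib_left mult_ac)
qed

definition zero_conf :: "'v \<Rightarrow> nat" where "zero_conf = (\<lambda>_. 0)"

lemma zero_conf_Xi: "zero_conf \<in> Xi 0" by (simp add: Xi_def zero_conf_def)

lemma Xi0: "eta \<in> Xi 0 \<Longrightarrow> eta = (zero_conf :: 'v::finite \<Rightarrow> nat)"
  by (auto simp: Xi_def zero_conf_def fun_eq_iff)

lemma Xi1: "eta \<in> Xi (Suc 0) \<Longrightarrow> \<exists>x. eta = addp (zero_conf :: 'v::finite \<Rightarrow> nat) x"
proof -
  assume e: "eta \<in> Xi (Suc 0)"
  have "\<exists>x. eta x \<noteq> 0"
  proof (rule ccontr)
    assume "\<not> (\<exists>x. eta x \<noteq> 0)"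
    hence "(\<Sum>x\<in>UNIV. eta x) = 0" by simp
    with e show False by (simp add: Xi_def)
  qed
  then obtain x where x: "eta x \<noteq> 0" by blast
  define z where "z = eta(x := eta x - 1)"
  have ez: "eta = addp z x" unfolding z_def using sub_addp[of eta x] x by simp
  have "(\<Sum>y\<in>UNIV. z y) = 0" using e unfolding ez by (simp add: Xi_def sum_addp)
  hence "z = zero_conf" by (auto simp: zero_conf_def fun_eq_iff)
  with ez show ?thesis by blast
qed

lemma sip_gen_delta:
  "sip_gen c alpha f (addp zero_conf x) = RWgen c alpha (\<lambda>y. f (addp zero_conf y)) x"
proof -
  have "sip_gen c alpha f (addp zero_conf x) = (\<Sum>x'\<in>UNIV. (if x' = x then 1 else 0) *
      (\<Sum>y\<in>UNIV. c x' y * (alpha y + real (addp zero_conf x y)) * (f (move (addp zero_conf x) x' y) - f (addp zero_conf x))))"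
    unfolding sip_gen_def by (intro sum.cong refl) (simp add: addp_def zero_conf_def)
  also have "\<dots> = (\<Sum>y\<in>UNIV. c x y * (alpha y + real (addp zero_conf x y)) * (f (addp zero_conf y) - f (addp zero_conf x)))"
    unfolding sum_delta_real by (simp add: move_addp)
  also have "\<dots> = RWgen c alpha (\<lambda>y. f (addp zero_conf y)) x"
    unfolding RWgen_def by (intro sum.cong refl) (auto simp: addp_def zero_conf_def)
  finally show ?thesis .
qed

lemma level1_eigen:
  assumes "sip_eigenvalue c alpha (Suc 0) lam"
  shows "\<exists>g. (\<exists>x. g x \<noteq> 0) \<and> (\<forall>x. RWgen c alpha g x = - lam * g x)"
proof -
  obtain f where f0: "\<exists>eta\<in>Xi (Suc 0). f eta \<noteq> 0" and fe: "\<forall>eta\<in>Xi (Suc 0). - sip_gen c alpha f eta = lam * f eta"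
    using assms unfolding sip_eigenvalue_def by blast
  define g where "g = (\<lambda>y. f (addp zero_conf y))"
  have mem: "addp zero_conf x \<in> Xi (Suc 0)" for x by (rule addp_Xi[OF zero_conf_Xi])
  have "\<exists>x. g x \<noteq> 0" using f0 Xi1 unfolding g_def by blast
  moreover have "RWgen c alpha g x = - lam * g x" for x
    using fe[rule_format, OF mem[of x]] unfolding g_def sip_gen_delta by simp
  ultimately show ?thesis by blast
qed

lemma lift_sip_eigenvalue:
  fixes c :: "'v::finite \<Rightarrow> 'v \<Rightarrow> real"
  assumes sym: "\<And>x y. c x y = c y x"
    and g0: "g x0 \<noteq> 0" and eig: "\<And>x. RWgen c alpha g x = - rho * g x"
    and k: "k \<ge> 1"
  shows "sip_eigenvalue c alpha k rho"
  unfolding sip_eigenvalue_def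
proof (intro exI conjI ballI)
  define eta0 where "eta0 = (zero_conf :: 'v \<Rightarrow> nat)(x0 := k)"
  have "eta0 \<in> Xi k" by (simp add: Xi_def eta0_def zero_conf_def sum.delta ifmult)
  moreover have "lift g eta0 = (\<Sum>x\<in>UNIV. (if x = x0 then real k else 0) * g x)"
    unfolding lift_def by (intro sum.cong refl) (simp add: eta0_def zero_conf_def)
  hence "lift g eta0 = real k * g x0" by (simp only: sum_delta_real)
  hence "lift g eta0 \<noteq> 0" using g0 k by simp
  ultimately show "\<exists>eta\<in>Xi k. lift g eta \<noteq> 0" by blast
next
  fix eta :: "'v \<Rightarrow> nat"
  show "- sip_gen c alpha (lift g) eta = rho * lift g eta" using lift_eigen[OF sym eig] by simp
qed



lemma Dform_scale: "Dform c alpha (\<lambda>x. a * u x) = a^2 * Dform c alpha u"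
  unfolding Dform_def by (simp add: sum_distrib_left power2_eq_square algebra_simps)

lemma Nform_scale: "Nform alpha (\<lambda>x. a * u x) = a^2 * Nform alpha u"
  unfolding Nform_def by (simp add: sum_distrib_left power2_eq_square algebra_simps)

lemma Dform_nonneg:
  assumes "\<And>x y. c x y \<ge> 0" "\<And>x. alpha x > 0"
  shows "Dform c alpha u \<ge> 0"
  unfolding Dform_def using assms by (intro mult_nonneg_nonneg sum_nonneg) (auto intro: less_imp_le)

lemma Nform_nonneg:
  assumes "\<And>x. alpha x > 0"
  shows "Nform alpha u \<ge> 0"
  unfolding Nform_def by (intro sum_nonneg mult_nonneg_nonneg[OF less_imp_le[OF assms]] zero_le_power2)

lemma Nform_zero:
  assumes "\<And>x. alpha x > 0" "Nform alpha u = 0"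
  shows "u x = 0"
proof -
  have "\<forall>x\<in>UNIV. alpha x * (u x)^2 = 0"
    using assms(2) unfolding Nform_def
    by (subst sum_nonneg_eq_0_iff[symmetric]) (auto intro: mult_nonneg_nonneg[OF less_imp_le[OF assms(1)] zero_le_power2])
  thus ?thesis using assms(1)[of x] by force
qed

lemma abs_le_sq: "\<bar>t::real\<bar> \<le> 1 + t^2"
proof -
  have "0 \<le> (\<bar>t\<bar> - 1)^2" by simp
  also have "(\<bar>t\<bar> - 1)^2 = t^2 - 2 * \<bar>t\<bar> + 1" by (simp add: power2_eq_square algebra_simps)
  finally show ?thesis by simp
qed

lemma RW_spectral:
  fixes c :: "'v::finite \<Rightarrow> 'v \<Rightarrow> real" and alpha :: "'v \<Rightarrow> real"
  assumes card: "card (UNIV :: 'v set) \<ge> 2"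
    and sym: "\<And>x y. c x y = c y x"
    and cnn: "\<And>x y. c x y \<ge> 0"
    and conn: "connected_weights c"
    and apos: "\<And>x. alpha x > 0"
  shows "\<exists>rho g. rho \<noteq> 0 \<and> (\<exists>x. g x \<noteq> 0) \<and> (\<forall>x. RWgen c alpha g x = - rho * g x)
     \<and> (\<forall>u. (\<Sum>x\<in>UNIV. alpha x * u x) = 0 \<longrightarrow> rho * Nform alpha u \<le> Dform c alpha u)"
proof -
  define S where "S = {v :: real^'v. (\<Sum>x\<in>UNIV. alpha x * v $ x) = 0 \<and> Nform alpha (\<lambda>x. v $ x) = 1}"
  obtain x1 y1 :: 'v where xy1: "x1 \<noteq> y1"
  proof -
    have "\<exists>x1 y1 :: 'v. x1 \<noteq> y1"
    proof (rule ccontr)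
      assume "\<not> (\<exists>x1 y1 :: 'v. x1 \<noteq> y1)"
      hence "(UNIV :: 'v set) = {undefined}" by auto
      hence "card (UNIV :: 'v set) = 1" by (metis card.empty card_insert_disjoint empty_iff finite.emptyI One_nat_def)
      with card show False by simp
    qed
    thus ?thesis using that by blast
  qed
  have scale_in: "vec_lambda (\<lambda>i. u i / sqrt (Nform alpha u)) \<in> S"
    if m: "(\<Sum>x\<in>UNIV. alpha x * u x) = 0" and np: "Nform alpha u > 0" for u
  proof -
    let ?s = "sqrt (Nform alpha u)"
    have "(\<Sum>x\<in>UNIV. alpha x * (u x / ?s)) = (\<Sum>x\<in>UNIV. alpha x * u x) / ?s"
      by (simp add: sum_divide_distrib)
    moreover have "Nform alpha (\<lambda>x. (1 / ?s) * u x) = 1"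
      unfolding Nform_scale using np by (simp add: power_divide)
    moreover have "(($) (vec_lambda (\<lambda>i. u i / ?s))) = (\<lambda>x. (1 / ?s) * u x)" by (simp add: fun_eq_iff)
    ultimately show ?thesis unfolding S_def using m by simp
  qed
  define u1 where "u1 = (\<lambda>i. (if i = x1 then alpha y1 else 0) - (if i = y1 then alpha x1 else 0))"
  have "(\<Sum>x\<in>UNIV. alpha x * u1 x) = (\<Sum>x\<in>UNIV. (if x = x1 then alpha y1 else 0) * alpha x)
        - (\<Sum>x\<in>UNIV. (if x = y1 then alpha x1 else 0) * alpha x)"
    unfolding u1_def sum_subtractf[symmetric] by (intro sum.cong refl) (simp add: algebra_simps)
  hence u1m: "(\<Sum>x\<in>UNIV. alpha x * u1 x) = 0" by (simp only: sum_delta_real) simp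
  have "u1 x1 \<noteq> 0" using xy1 apos[of y1] by (simp add: u1_def)
  hence "Nform alpha u1 \<noteq> 0" using Nform_zero[where alpha=alpha, OF apos] by blast
  hence "Nform alpha u1 > 0" using Nform_nonneg[where alpha=alpha, OF apos, of u1] by simp
  hence Sne: "S \<noteq> {}" using scale_in[OF u1m] by blast
  have "bounded S"
    unfolding bounded_iff
  proof (intro exI ballI)
    fix v assume "v \<in> S"
    hence N1: "Nform alpha (\<lambda>x. v $ x) = 1" by (simp add: S_def)
    have "\<bar>v $ i\<bar> \<le> 1 + 1 / alpha i" for i
    proof -
      have "alpha i * (v $ i)^2 \<le> Nform alpha (\<lambda>x. v $ x)"
        unfolding Nform_def by (rule member_le_sum) (auto intro: mult_nonneg_nonneg[OF less_imp_le[OF apos] zero_le_power2])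
      hence "(v $ i)^2 \<le> 1 / alpha i" using N1 apos[of i] by (simp add: field_simps)
      moreover have "\<bar>v $ i\<bar> \<le> 1 + (v $ i)^2" by (rule abs_le_sq)
      ultimately show ?thesis by linarith
    qed
    hence "(\<Sum>i\<in>UNIV. \<bar>v $ i\<bar>) \<le> (\<Sum>i\<in>UNIV. 1 + 1 / alpha i)" by (intro sum_mono)
    thus "norm v \<le> (\<Sum>i\<in>UNIV. 1 + 1 / alpha i)" using norm_le_l1_cart[of v] by linarith
  qed
  moreover have "closed S"
  proof -
    have "S = {v. (\<Sum>x\<in>UNIV. alpha x * v $ x) = 0} \<inter> {v. (\<Sum>x\<in>UNIV. alpha x * (v $ x)^2) = 1}"
      unfolding S_def Nform_def by auto
    moreover have "closed {v :: real^'v. (\<Sum>x\<in>UNIV. alpha x * v $ x) = 0}"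
      by (rule closed_Collect_eq) (intro continuous_intros)+
    moreover have "closed {v :: real^'v. (\<Sum>x\<in>UNIV. alpha x * (v $ x)^2) = 1}"
      by (rule closed_Collect_eq) (intro continuous_intros)+
    ultimately show ?thesis by auto
  qed
  ultimately have "compact S" by (simp add: compact_eq_bounded_closed)
  moreover have "continuous_on S (\<lambda>v. Dform c alpha (\<lambda>x. v $ x))"
    unfolding Dform_def by (intro continuous_intros)
  ultimately obtain v0 where v0S: "v0 \<in> S" and v0min: "\<And>v. v \<in> S \<Longrightarrow> Dform c alpha (\<lambda>x. v0 $ x) \<le> Dform c alpha (\<lambda>x. v $ x)"
    using continuous_attains_inf[OF _ Sne] by blast
  define g where "g = (\<lambda>x. v0 $ x)"
  define rho where "rho = Dform c alpha g"
  have gm: "(\<Sum>x\<in>UNIV. alpha x * g x) = 0" and gN: "Nform alpha g = 1" using v0S by (auto simp: S_def g_def)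
  have poinc: "rho * Nform alpha u \<le> Dform c alpha u" if um: "(\<Sum>x\<in>UNIV. alpha x * u x) = 0" for u
  proof (cases "Nform alpha u = 0")
    case True thus ?thesis using Dform_nonneg[where alpha=alpha and c=c, OF cnn apos] by simp
  next
    case False
    hence np: "Nform alpha u > 0" using Nform_nonneg[where alpha=alpha, OF apos, of u] by simp
    let ?s = "sqrt (Nform alpha u)"
    have "rho \<le> Dform c alpha (\<lambda>x. (1 / ?s) * u x)"
      using v0min[OF scale_in[OF um np]] unfolding rho_def g_def by simp
    also have "\<dots> = Dform c alpha u / Nform alpha u" unfolding Dform_scale using np by (simp add: power_divide)
    finally show ?thesis using np by (simp add: field_simps)
  qed
  \<comment> \<open>Euler-Lagrange\<close>
  have EL: "(\<Sum>x\<in>UNIV. alpha x * h x * (RWgen c alpha g x + rho * g x)) = 0"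
    if hm: "(\<Sum>x\<in>UNIV. alpha x * h x) = 0" for h
  proof -
    have "2 * t * (DB c alpha g h - rho * (\<Sum>x\<in>UNIV. alpha x * g x * h x)) + t^2 * (Dform c alpha h - rho * Nform alpha h) \<ge> 0" for t
    proof -
      have "(\<Sum>x\<in>UNIV. alpha x * (g x + t * h x)) = (\<Sum>x\<in>UNIV. alpha x * g x) + t * (\<Sum>x\<in>UNIV. alpha x * h x)"
        by (simp add: sum.distrib sum_distrib_left algebra_simps)
      hence "(\<Sum>x\<in>UNIV. alpha x * (g x + t * h x)) = 0" using gm hm by simp
      from poinc[OF this] have "rho * (1 + 2 * t * (\<Sum>x\<in>UNIV. alpha x * g x * h x) + t^2 * Nform alpha h)
          \<le> rho + 2 * t * DB c alpha g h + t^2 * Dform c alpha h"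
        unfolding Dform_expand Nform_expand gN by (simp add: rho_def)
      thus ?thesis by (simp add: algebra_simps)
    qed
    hence "DB c alpha g h - rho * (\<Sum>x\<in>UNIV. alpha x * g x * h x) = 0" by (rule quad_zero)
    hence e: "(\<Sum>x\<in>UNIV. alpha x * h x * RWgen c alpha g x) = - rho * (\<Sum>x\<in>UNIV. alpha x * g x * h x)"
      unfolding DB_RWgen[OF sym] by linarith
    have "(\<Sum>x\<in>UNIV. alpha x * h x * (RWgen c alpha g x + rho * g x))
       = (\<Sum>x\<in>UNIV. alpha x * h x * RWgen c alpha g x) + rho * (\<Sum>x\<in>UNIV. alpha x * g x * h x)"
      by (simp add: sum.distrib sum_distrib_left distrib_left mult_ac)
    thus ?thesis using e by simp
  qed
  define w where "w = (\<lambda>x. RWgen c alpha g x + rho * g x)"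
  have "(\<Sum>x\<in>UNIV. alpha x * w x) = (\<Sum>x\<in>UNIV. alpha x * RWgen c alpha g x) + rho * (\<Sum>x\<in>UNIV. alpha x * g x)"
    unfolding w_def by (simp add: sum.distrib sum_distrib_left algebra_simps)
  hence "(\<Sum>x\<in>UNIV. alpha x * w x) = 0" using gm sum_RWgen[OF sym] by simp
  from EL[OF this] have "(\<Sum>x\<in>UNIV. alpha x * w x * w x) = 0" by (simp only: w_def)
  moreover have "Nform alpha w = (\<Sum>x\<in>UNIV. alpha x * w x * w x)"
    unfolding Nform_def by (intro sum.cong refl) (simp only: power2_eq_square mult.assoc)
  ultimately have "Nform alpha w = 0" by simp
  hence eig: "RWgen c alpha g x = - rho * g x" for x using Nform_zero[where alpha=alpha, OF apos, of w x] by (simp add: w_def)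
  have gnz: "\<exists>x. g x \<noteq> 0"
  proof (rule ccontr)
    assume "\<not> (\<exists>x. g x \<noteq> 0)" hence "Nform alpha g = 0" by (simp add: Nform_def)
    with gN show False by simp
  qed
  have rnz: "rho \<noteq> 0"
  proof
    assume r0: "rho = 0"
    let ?T = "\<lambda>x y. c x y * alpha x * alpha y * (g x - g y)^2"
    have nn: "0 \<le> ?T x y" for x y
      by (intro mult_nonneg_nonneg cnn less_imp_le[OF apos] zero_le_power2)
    have nn2: "0 \<le> (\<Sum>y\<in>UNIV. ?T x y)" for x by (intro sum_nonneg nn)
    have s0: "(\<Sum>x\<in>UNIV. \<Sum>y\<in>UNIV. ?T x y) = 0" using r0 by (simp add: rho_def Dform_def)
    have "(\<Sum>y\<in>UNIV. ?T x y) = 0" for x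
      using s0 sum_nonneg_eq_0_iff[of UNIV "\<lambda>x. \<Sum>y\<in>UNIV. ?T x y"] nn2 by auto
    hence T0: "?T x y = 0" for x y
      using sum_nonneg_eq_0_iff[of UNIV "\<lambda>y. ?T x y"] nn by auto
    have edge: "g x = g y" if cp: "c x y > 0" for x y
    proof -
      have "c x y * alpha x * alpha y * (g x - g y)^2 = 0" by (rule T0)
      thus ?thesis using cp apos[of x] apos[of y] by simp
    qed
    have gc: "g y = g x1" for y
    proof -
      have "(\<lambda>a b. c a b > 0)\<^sup>*\<^sup>* x1 y" using conn unfolding connected_weights_def by blast
      thus ?thesis
      proof (induction rule: rtranclp_induct)
        case base show ?case by simp
      next
        case (step b z) thus ?case using edge[of b z] by simp
      qed
    qed
    obtain kap where gk: "g = (\<lambda>_. kap)" using gc by blast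
    have "(\<Sum>x\<in>UNIV. alpha x * g x) = kap * (\<Sum>x\<in>UNIV. alpha x)" unfolding gk by (simp add: sum_distrib_left mult_ac)
    moreover have "(\<Sum>x\<in>UNIV. alpha x) > 0" by (rule sum_pos) (auto intro: apos)
    ultimately have "kap = 0" using gm by simp
    with gk gnz show False by simp
  qed
  have "rho \<noteq> 0 \<and> (\<exists>x. g x \<noteq> 0) \<and> (\<forall>x. RWgen c alpha g x = - rho * g x)
     \<and> (\<forall>u. (\<Sum>x\<in>UNIV. alpha x * u x) = 0 \<longrightarrow> rho * Nform alpha u \<le> Dform c alpha u)"
    using rnz gnz eig poinc by simp
  thus ?thesis by (intro exI)
qed



lemma key_ineq:
  fixes a :: real and j :: nat
  assumes "a > 0"
  shows "min 1 a * (1 + real j / a) \<le> real (Suc j)"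
proof (cases "a \<ge> 1")
  case True
  have "real j / a \<le> real j / 1" using True by (intro divide_left_mono) auto
  thus ?thesis using True by simp
next
  case False
  hence "min 1 a * (1 + real j / a) = a + real j" using assms by (simp add: field_simps)
  thus ?thesis using False by simp
qed

lemma fiber:
  fixes c :: "'v::finite \<Rightarrow> 'v \<Rightarrow> real" and alpha :: "'v \<Rightarrow> real"
  assumes P: "\<And>u. (\<Sum>x\<in>UNIV. alpha x * u x) = 0 \<Longrightarrow> G * Nform alpha u \<le> Dform c alpha u"
    and G: "G \<ge> 0"
    and cnn: "\<And>x y. c x y \<ge> 0"
    and apos: "\<And>x. alpha x > 0"
    and amin: "\<And>x. amin \<le> alpha x" "amin > 0"
    and xi: "\<And>x. xi x \<le> j"
    and gm: "(\<Sum>x\<in>UNIV. (alpha x + real (xi x)) * g x) = 0"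
  shows "min 1 amin * G * (\<Sum>x\<in>UNIV. (alpha x + real (xi x)) * (g x)^2)
      \<le> real (Suc j) * ((1/2) * (\<Sum>x\<in>UNIV. \<Sum>y\<in>UNIV. c x y * (alpha x + real (xi x)) * (alpha y + real (xi y)) * (g y - g x)^2))"
proof -
  define w where "w = (\<lambda>x. alpha x + real (xi x))"
  have wpos: "w x > 0" for x using apos[of x] by (simp add: w_def add_pos_nonneg)
  define A where "A = (\<Sum>x\<in>UNIV. alpha x)"
  have Apos: "A > 0" unfolding A_def by (rule sum_pos) (auto intro: apos)
  define m where "m = (\<Sum>x\<in>UNIV. alpha x * g x) / A"
  define u where "u = (\<lambda>x. g x - m)"
  have um: "(\<Sum>x\<in>UNIV. alpha x * u x) = 0"
  proof -
    have "(\<Sum>x\<in>UNIV. alpha x * u x) = (\<Sum>x\<in>UNIV. alpha x * g x) - m * A"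
      unfolding u_def A_def by (simp add: sum_subtractf sum_distrib_left right_diff_distrib mult_ac)
    thus ?thesis unfolding m_def using Apos by simp
  qed
  define V where "V = Nform alpha u"
  have V0: "V \<ge> 0" unfolding V_def by (rule Nform_nonneg[where alpha=alpha, OF apos])
  have Du: "Dform c alpha u = Dform c alpha g" unfolding Dform_def u_def by simp
  have "G * V \<le> Dform c alpha g" using P[OF um] Du V_def by simp
  also have "Dform c alpha g \<le> (1/2) * (\<Sum>x\<in>UNIV. \<Sum>y\<in>UNIV. c x y * w x * w y * (g y - g x)^2)"
    unfolding Dform_def
  proof (intro mult_left_mono sum_mono)
    fix x y
    have "alpha x * alpha y \<le> w x * w y"
      using apos[of x] apos[of y] by (intro mult_mono) (auto simp: w_def)
    hence "c x y * (alpha x * alpha y) * (g x - g y)^2 \<le> c x y * (w x * w y) * (g x - g y)^2"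
      by (intro mult_right_mono mult_left_mono cnn) auto
    thus "c x y * alpha x * alpha y * (g x - g y)^2 \<le> c x y * w x * w y * (g y - g x)^2"
      by (simp add: mult_ac power2_commute)
  qed simp
  finally have GV: "G * V \<le> (1/2) * (\<Sum>x\<in>UNIV. \<Sum>y\<in>UNIV. c x y * w x * w y * (g y - g x)^2)" .
  have "(\<Sum>x\<in>UNIV. w x * (g x)^2) \<le> (\<Sum>x\<in>UNIV. w x * (u x)^2)"
  proof -
    have "(\<Sum>x\<in>UNIV. w x * (u x)^2) = (\<Sum>x\<in>UNIV. w x * (g x)^2) - 2 * m * (\<Sum>x\<in>UNIV. w x * g x) + m^2 * (\<Sum>x\<in>UNIV. w x)"
      unfolding u_def by (simp add: power2_eq_square algebra_simps sum.distrib sum_subtractf sum_distrib_left)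
    moreover have "(\<Sum>x\<in>UNIV. w x * g x) = 0" using gm by (simp add: w_def)
    moreover have "(\<Sum>x\<in>UNIV. w x) \<ge> 0" by (intro sum_nonneg) (auto intro: less_imp_le wpos)
    ultimately show ?thesis by simp
  qed
  also have "(\<Sum>x\<in>UNIV. w x * (u x)^2) \<le> (1 + real j / amin) * V"
  proof -
    have "w x * (u x)^2 \<le> (1 + real j / amin) * (alpha x * (u x)^2)" for x
    proof -
      have "real (xi x) \<le> real j" using xi[of x] by simp
      also have "real j \<le> real j / amin * alpha x"
        using mult_right_mono[OF amin(1)[of x], of "real j"] amin(2) by (simp add: field_simps mult.commute)
      finally have "w x \<le> (1 + real j / amin) * alpha x" by (simp add: w_def algebra_simps)
      thus ?thesis by (simp add: mult_right_mono mult.assoc[symmetric])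
    qed
    hence "(\<Sum>x\<in>UNIV. w x * (u x)^2) \<le> (\<Sum>x\<in>UNIV. (1 + real j / amin) * (alpha x * (u x)^2))"
      by (rule sum_mono)
    thus ?thesis by (simp add: V_def Nform_def sum_distrib_left)
  qed
  finally have W: "(\<Sum>x\<in>UNIV. w x * (g x)^2) \<le> (1 + real j / amin) * V" .
  have mpos: "min 1 amin \<ge> 0" using amin(2) by simp
  have "min 1 amin * G * (\<Sum>x\<in>UNIV. w x * (g x)^2) \<le> min 1 amin * G * ((1 + real j / amin) * V)"
    using W mpos G by (intro mult_left_mono) auto
  also have "\<dots> = (min 1 amin * (1 + real j / amin)) * (G * V)" by (simp add: mult_ac)
  also have "\<dots> \<le> real (Suc j) * (G * V)"
    using key_ineq[OF amin(2), of j] G V0 by (intro mult_right_mono) auto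
  also have "\<dots> \<le> real (Suc j) * ((1/2) * (\<Sum>x\<in>UNIV. \<Sum>y\<in>UNIV. c x y * w x * w y * (g y - g x)^2))"
    using GV by (intro mult_left_mono) auto
  finally show ?thesis by (simp add: w_def)
qed


lemma eig_energy:
  fixes c :: "'v::finite \<Rightarrow> 'v \<Rightarrow> real" and alpha :: "'v \<Rightarrow> real"
  assumes sym: "\<And>x y. c x y = c y x"
    and fe: "\<forall>eta\<in>Xi (Suc j). - sip_gen c alpha f eta = lam * f eta"
  shows "lam * (\<Sum>eta\<in>Xi (Suc j). Wt alpha eta * (f eta)^2)
     = (1/2) * (\<Sum>xi\<in>Xi j. Wt alpha xi * (\<Sum>x\<in>UNIV. \<Sum>y\<in>UNIV.
          c x y * (alpha x + real (xi x)) * (alpha y + real (xi y)) * (f (addp xi y) - f (addp xi x))^2))"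
proof -
  have "(\<Sum>eta\<in>Xi (Suc j). Wt alpha eta * f eta * sip_gen c alpha f eta) = - lam * (\<Sum>eta\<in>Xi (Suc j). Wt alpha eta * (f eta)^2)"
    unfolding sum_distrib_left
  proof (intro sum.cong refl)
    fix eta :: "'v \<Rightarrow> nat" assume "eta \<in> Xi (Suc j)"
    hence "sip_gen c alpha f eta = - (lam * f eta)" using fe by (metis minus_minus)
    thus "Wt alpha eta * f eta * sip_gen c alpha f eta = - lam * (Wt alpha eta * (f eta)^2)"
      by (simp add: power2_eq_square)
  qed
  thus ?thesis using dirichlet[OF sym, where alpha=alpha and k=j and f=f] by simp
qed

lemma Npos:
  fixes alpha :: "'v::finite \<Rightarrow> real"
  assumes apos: "\<And>x. alpha x > 0" and e: "ez \<in> Xi k" "f ez \<noteq> 0"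
  shows "(\<Sum>eta\<in>Xi k. Wt alpha eta * (f eta)^2) > 0"
proof (rule sum_pos2[OF finite_Xi e(1)])
  show "0 < Wt alpha ez * (f ez)^2" using e(2) Wt_pos[where alpha=alpha, OF apos] by simp
  show "\<And>i. i \<in> Xi k \<Longrightarrow> 0 \<le> Wt alpha i * (f i)^2"
    using Wt_pos[where alpha=alpha, OF apos] by (simp add: less_imp_le)
qed

lemma energy_nonneg:
  fixes c :: "'v::finite \<Rightarrow> 'v \<Rightarrow> real" and alpha :: "'v \<Rightarrow> real"
  assumes cnn: "\<And>x y. c x y \<ge> 0" and apos: "\<And>x. alpha x > 0"
  shows "0 \<le> (\<Sum>xi\<in>Xi j. Wt alpha xi * (\<Sum>x\<in>UNIV. \<Sum>y\<in>UNIV.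
          c x y * (alpha x + real (xi x)) * (alpha y + real (xi y)) * (f (addp xi y) - f (addp xi x))^2))"
proof -
  have w: "0 \<le> alpha x + real (xi x)" for x and xi :: "'v \<Rightarrow> nat"
    using apos[of x] by simp
  show ?thesis
    using Wt_pos[where alpha=alpha, OF apos]
    by (intro sum_nonneg mult_nonneg_nonneg cnn zero_le_power2 w less_imp_le)
qed

lemma eig_nonneg:
  fixes c :: "'v::finite \<Rightarrow> 'v \<Rightarrow> real" and alpha :: "'v \<Rightarrow> real"
  assumes sym: "\<And>x y. c x y = c y x" and cnn: "\<And>x y. c x y \<ge> 0" and apos: "\<And>x. alpha x > 0"
    and ev: "sip_eigenvalue c alpha (Suc j) lam"
  shows "lam \<ge> 0"
proof -
  obtain f eta0 where e: "eta0 \<in> Xi (Suc j)" "f eta0 \<noteq> 0" and fe: "\<forall>eta\<in>Xi (Suc j). - sip_gen c alpha f eta = lam * f eta"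
    using ev unfolding sip_eigenvalue_def by blast
  have "lam * (\<Sum>eta\<in>Xi (Suc j). Wt alpha eta * (f eta)^2) \<ge> 0"
    unfolding eig_energy[OF sym fe] using energy_nonneg[where alpha=alpha and c=c, OF cnn apos] by simp
  thus ?thesis using Npos[where alpha=alpha and ez=eta0 and f=f and k="Suc j", OF apos e] by (simp add: zero_le_mult_iff)
qed

lemma main_induct:
  fixes c :: "'v::finite \<Rightarrow> 'v \<Rightarrow> real" and alpha :: "'v \<Rightarrow> real"
  assumes P: "\<And>u. (\<Sum>x\<in>UNIV. alpha x * u x) = 0 \<Longrightarrow> G * Nform alpha u \<le> Dform c alpha u"
    and G: "G \<ge> 0"
    and sym: "\<And>x y. c x y = c y x"
    and cnn: "\<And>x y. c x y \<ge> 0"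
    and apos: "\<And>x. alpha x > 0"
    and amin: "\<And>x. amin \<le> alpha x" "amin > 0"
  shows "lam \<noteq> 0 \<Longrightarrow> sip_eigenvalue c alpha k lam \<Longrightarrow> min 1 amin * G \<le> lam"
proof (induction k)
  case 0
  obtain f eta0 where e: "eta0 \<in> Xi 0" "f eta0 \<noteq> 0" and fe: "\<forall>eta\<in>Xi 0. - sip_gen c alpha f eta = lam * f eta"
    using "0.prems"(2) unfolding sip_eigenvalue_def by blast
  have z: "eta0 = zero_conf" using Xi0[OF e(1)] .
  have "sip_gen c alpha f zero_conf = 0" by (simp add: sip_gen_def zero_conf_def)
  hence "lam * f eta0 = 0" using fe e(1) z by force
  with e(2) "0.prems"(1) show ?case by simp
next
  case (Suc j)
  obtain f eta0 where e: "eta0 \<in> Xi (Suc j)" "f eta0 \<noteq> 0" and fe: "\<forall>eta\<in>Xi (Suc j). - sip_gen c alpha f eta = lam * f eta"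
    using Suc.prems(2) unfolding sip_eigenvalue_def by blast
  define F where "F = astar alpha f"
  show ?case
  proof (cases "\<exists>xi\<in>Xi j. F xi \<noteq> 0")
    case True
    have "sip_eigenvalue c alpha j lam"
      unfolding sip_eigenvalue_def
    proof (intro exI conjI ballI)
      show "\<exists>eta\<in>Xi j. F eta \<noteq> 0" by (rule True)
    next
      fix xi :: "'v \<Rightarrow> nat" assume xi: "xi \<in> Xi j"
      have "- sip_gen c alpha F xi = (\<Sum>z\<in>UNIV. (alpha z + real (xi z)) * (- sip_gen c alpha f (addp xi z)))"
        unfolding F_def intertwine[OF sym] by (simp add: sum_negf[symmetric])
      also have "\<dots> = (\<Sum>z\<in>UNIV. (alpha z + real (xi z)) * (lam * f (addp xi z)))"
        using fe addp_Xi[OF xi] by simp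
      also have "\<dots> = lam * F xi" unfolding F_def astar_def by (simp add: sum_distrib_left mult_ac)
      finally show "- sip_gen c alpha F xi = lam * F xi" .
    qed
    thus ?thesis using Suc.IH Suc.prems(1) by blast
  next
    case False
    hence F0: "\<And>xi. xi \<in> Xi j \<Longrightarrow> F xi = 0" by blast
    define N where "N = (\<Sum>eta\<in>Xi (Suc j). Wt alpha eta * (f eta)^2)"
    have Np: "N > 0" unfolding N_def by (rule Npos[where alpha=alpha and ez=eta0 and f=f and k="Suc j", OF apos e])
    have "min 1 amin * G * (real (Suc j) * N)
        = (\<Sum>xi\<in>Xi j. Wt alpha xi * (min 1 amin * G * (\<Sum>x\<in>UNIV. (alpha x + real (xi x)) * (f (addp xi x))^2)))"
      unfolding N_def normsq by (simp add: sum_distrib_left mult_ac)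
    also have "\<dots> \<le> (\<Sum>xi\<in>Xi j. Wt alpha xi * (real (Suc j) * ((1/2) * (\<Sum>x\<in>UNIV. \<Sum>y\<in>UNIV.
          c x y * (alpha x + real (xi x)) * (alpha y + real (xi y)) * (f (addp xi y) - f (addp xi x))^2))))"
    proof (intro sum_mono mult_left_mono)
      fix xi :: "'v \<Rightarrow> nat" assume xi: "xi \<in> Xi j"
      show "0 \<le> Wt alpha xi" using Wt_pos[where alpha=alpha, OF apos] by (simp add: less_imp_le)
      have xb: "xi x \<le> j" for x
      proof -
        have "xi x \<le> (\<Sum>y\<in>UNIV. xi y)" by (rule member_le_sum) auto
        thus ?thesis using xi by (simp add: Xi_def)
      qed
      have gm: "(\<Sum>x\<in>UNIV. (alpha x + real (xi x)) * f (addp xi x)) = 0"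
        using F0[OF xi] by (simp add: F_def astar_def)
      show "min 1 amin * G * (\<Sum>x\<in>UNIV. (alpha x + real (xi x)) * (f (addp xi x))^2)
        \<le> real (Suc j) * ((1/2) * (\<Sum>x\<in>UNIV. \<Sum>y\<in>UNIV.
          c x y * (alpha x + real (xi x)) * (alpha y + real (xi y)) * (f (addp xi y) - f (addp xi x))^2))"
        by (rule fiber[OF P G cnn apos amin xb gm])
    qed
    also have "\<dots> = real (Suc j) * (lam * N)"
      unfolding N_def eig_energy[OF sym fe] by (simp add: sum_distrib_left mult_ac)
    finally have "(min 1 amin * G) * (real (Suc j) * N) \<le> lam * (real (Suc j) * N)" by (simp add: mult_ac)
    moreover have "real (Suc j) * N > 0" using Np by simp
    ultimately show ?thesis by (rule mult_right_le_imp_le)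
  qed
qed


theorem theorem1p1:
  fixes c :: "'v::finite \<Rightarrow> 'v \<Rightarrow> real" and alpha :: "'v \<Rightarrow> real"
  assumes "card (UNIV :: 'v set) \<ge> 2"
    and "\<And>x y. c x y = c y x"
    and "\<And>x y. c x y \<ge> 0"
    and "connected_weights c"
    and "\<And>x. alpha x > 0"
  shows "min 1 (Min (range alpha)) * gap_RW c alpha \<le> gap_SIP c alpha
         \<and> gap_SIP c alpha \<le> gap_RW c alpha"
proof -
  note card = assms(1) and sym = assms(2) and cnn = assms(3) and conn = assms(4) and apos = assms(5)
  obtain rho g0 where rnz: "rho \<noteq> 0" and g0nz: "\<exists>x. g0 x \<noteq> 0"
    and eig: "\<forall>x. RWgen c alpha g0 x = - rho * g0 x"
    and poinc: "\<forall>u. (\<Sum>x\<in>UNIV. alpha x * u x) = 0 \<longrightarrow> rho * Nform alpha u \<le> Dform c alpha u"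
    using RW_spectral[where c=c and alpha=alpha, OF card sym cnn conn apos] by blast
  define S where "S = (\<lambda>k. {lam. lam \<noteq> 0 \<and> sip_eigenvalue c alpha k lam})"
  have gapS: "gap c alpha k = Inf (S k)" for k by (simp add: gap_def S_def)
  obtain x0 where x0: "g0 x0 \<noteq> 0" using g0nz by blast
  have rhoS: "rho \<in> S k" if "k \<ge> 1" for k
    using lift_sip_eigenvalue[where c=c and alpha=alpha and g=g0 and rho=rho, OF sym x0 _ that] eig rnz by (simp add: S_def)
  have S1sub: "S 1 \<subseteq> S k" if "k \<ge> 1" for k
  proof
    fix lam assume "lam \<in> S 1"
    hence l: "lam \<noteq> 0" "sip_eigenvalue c alpha (Suc 0) lam" by (auto simp: S_def)
    obtain g where "\<exists>x. g x \<noteq> 0" "\<forall>x. RWgen c alpha g x = - lam * g x"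
      using level1_eigen[OF l(2)] by blast
    then obtain x1 where "g x1 \<noteq> 0" by blast
    from lift_sip_eigenvalue[where c=c and alpha=alpha and g=g and rho=lam, OF sym this _ that] \<open>\<forall>x. RWgen c alpha g x = - lam * g x\<close>
    have "sip_eigenvalue c alpha k lam" by simp
    with l show "lam \<in> S k" by (simp add: S_def)
  qed
  have Snn: "lam \<ge> 0" if H: "lam \<in> S k" "k \<ge> 1" for lam k
  proof -
    obtain j where "k = Suc j" using H(2) by (cases k) auto
    thus ?thesis using H(1) eig_nonneg[where c=c and alpha=alpha, OF sym cnn apos] by (auto simp: S_def)
  qed
  have Sne: "S k \<noteq> {}" if "k \<ge> 1" for k using rhoS[OF that] by blast
  have Sbdd: "bdd_below (S k)" if "k \<ge> 1" for k
    unfolding bdd_below_def using Snn[OF _ that] by blast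
  define G where "G = gap c alpha 1"
  have G0: "G \<ge> 0" unfolding G_def gapS by (rule cInf_greatest[OF Sne]) (auto intro: Snn)
  have Grho: "G \<le> rho" unfolding G_def gapS by (rule cInf_lower[OF rhoS Sbdd]) auto
  have P: "G * Nform alpha u \<le> Dform c alpha u" if "(\<Sum>x\<in>UNIV. alpha x * u x) = 0" for u
  proof -
    have "G * Nform alpha u \<le> rho * Nform alpha u"
      using Grho Nform_nonneg[where alpha=alpha, OF apos, of u] by (rule mult_right_mono)
    also have "\<dots> \<le> Dform c alpha u" using poinc that by blast
    finally show ?thesis .
  qed
  define amin where "amin = Min (range alpha)"
  have amin_le: "amin \<le> alpha x" for x unfolding amin_def by (rule Min_le) auto
  have amin_pos: "amin > 0"
  proof -
    have "amin \<in> range alpha" unfolding amin_def by (rule Min_in) auto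
    thus ?thesis using apos by auto
  qed
  define b where "b = min 1 amin * G"
  have b0: "b \<ge> 0" unfolding b_def using amin_pos G0 by simp
  have Sb: "b \<le> lam" if "lam \<in> S k" for lam k
    using that main_induct[where c=c and alpha=alpha and G=G and amin=amin, OF P G0 sym cnn apos amin_le amin_pos] unfolding b_def S_def by blast
  have gapk: "b \<le> gap c alpha k" if "k \<ge> 2" for k
    unfolding gapS using that by (intro cInf_greatest[OF Sne]) (auto intro: Sb)
  have lower: "b \<le> gap_SIP c alpha"
    unfolding gap_SIP_def by (rule cINF_greatest) (auto intro: gapk)
  have "gap_SIP c alpha \<le> gap c alpha 2"
    unfolding gap_SIP_def
  proof (rule cINF_lower)
    show "bdd_below (gap c alpha ` {k. 2 \<le> k})"
      unfolding bdd_below_def using gapk by blast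
  qed simp
  also have "gap c alpha 2 \<le> gap c alpha 1"
    unfolding gapS by (rule cInf_superset_mono[OF Sne Sbdd S1sub]) auto
  finally have upper: "gap_SIP c alpha \<le> gap_RW c alpha" by (simp add: gap_RW_def)
  show ?thesis using lower upper unfolding b_def amin_def G_def gap_RW_def by simp
qed

end
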